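(* Let $\mathcal{A}$ be a unital algebra generated by two unital subalgebras $\mathcal{A}_1,\mathcal{A}_2$. Let $T\subset \mathbb{R}$ be such that $0$ is an accumulation point of $T$, and let $(\tau_t)_{t\in T}$ be unital linear functionals on $\mathcal{A}$ such that: $\mathcal{A}_1$ and $\mathcal{A}_2$ are free with respect to $\tau_t$ up to order $o(t)$; and there exist maps $\tau,\tau':\mathcal{A}_1\cup \mathcal{A}_2\to \mathbb{C}$ such that for all $a\in \mathcal{A}_1 \cup \mathcal{A}_2$, as $t\to 0$, $\tau_t(a)= \tau(a)+t\, \tau'(a) +o(t)$. Then $\tau$ and $\tau'$ extend to linear functionals on $\mathcal{A}$ such that for all $a\in \mathcal{A}$, as $t\to 0$, $\tau_t(a)= \tau(a)+t\,\tau'(a) +o(t)$. Moreover, $\mathcal{A}_1$ and $\mathcal{A}_2$ are infinitesimally free with respect to $(\tau,\tau')$.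
   Context: $\mathcal{A}_1$ and $\mathcal{A}_2$ are free with respect to $\tau_t$ up to order $o(t)$ if whenever $a_1\in\mathcal{A}_{i_1},\dots,a_n\in\mathcal{A}_{i_n}$ with consecutive indices different, $\tau_t((a_1-\tau_t(a_1))\cdots(a_n-\tau_t(a_n)))=o(t)$ as $t\to0$. Infinitesimal freeness w.r.t. $(\tau,\tau')$ (where $\tau(1)=1,\tau'(1)=0$): whenever $a_j\in\mathcal{A}_{i_j}$ with consecutive indices different and $\tau(a_j)=0$ for all $j$, $\tau(a_1\cdots a_n)=0$ and $\tau'(a_1\cdots a_n)=\sum_{j=1}^n\tau(a_1\cdots a_{j-1}\tau'(a_j)a_{j+1}\cdots a_n)$. *)

theory Defs
  imports "HOL-Analysis.Analysis" "HOL-Library.Landau_Symbols"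
begin

definition complex_algebra :: "(complex \<Rightarrow> 'a::ring_1 \<Rightarrow> 'a) \<Rightarrow> bool" where
  "complex_algebra s \<longleftrightarrow> vector_space s \<and>
     (\<forall>c x y. s c (x * y) = s c x * y \<and> s c (x * y) = x * s c y)"

definition unital_subalgebra :: "(complex \<Rightarrow> 'a::ring_1 \<Rightarrow> 'a) \<Rightarrow> 'a set \<Rightarrow> bool" where
  "unital_subalgebra s S \<longleftrightarrow> 1 \<in> S \<and>
     (\<forall>x\<in>S. \<forall>y\<in>S. x + y \<in> S \<and> x * y \<in> S) \<and> (\<forall>c. \<forall>x\<in>S. s c x \<in> S)"

definition generated_by :: "(complex \<Rightarrow> 'a::ring_1 \<Rightarrow> 'a) \<Rightarrow> 'a set \<Rightarrow> 'a set \<Rightarrow> bool" where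
  "generated_by s A1 A2 \<longleftrightarrow>
     (\<forall>B. unital_subalgebra s B \<and> A1 \<union> A2 \<subseteq> B \<longrightarrow> B = UNIV)"

definition lin_functional :: "(complex \<Rightarrow> 'a::ab_group_add \<Rightarrow> 'a) \<Rightarrow> ('a \<Rightarrow> complex) \<Rightarrow> bool" where
  "lin_functional s f \<longleftrightarrow> Vector_Spaces.linear s ((*) :: complex \<Rightarrow> complex \<Rightarrow> complex) f"

definition alt_word :: "'a set \<Rightarrow> 'a set \<Rightarrow> nat \<Rightarrow> (nat \<Rightarrow> bool) \<Rightarrow> (nat \<Rightarrow> 'a) \<Rightarrow> bool" where
  "alt_word A1 A2 n i a \<longleftrightarrow>
     (\<forall>j<n. a j \<in> (if i j then A1 else A2)) \<and> (\<forall>j. Suc j < n \<longrightarrow> i j \<noteq> i (Suc j))"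

definition word_prod :: "nat \<Rightarrow> (nat \<Rightarrow> 'a::monoid_mult) \<Rightarrow> 'a" where
  "word_prod n a = prod_list (map a [0..<n])"

definition small_o_t :: "real set \<Rightarrow> (real \<Rightarrow> complex) \<Rightarrow> bool" where
  "small_o_t T f \<longleftrightarrow> f \<in> o[at 0 within T](\<lambda>t. complex_of_real t)"

definition free_up_to_o_t ::
  "(complex \<Rightarrow> 'a::ring_1 \<Rightarrow> 'a) \<Rightarrow> real set \<Rightarrow> (real \<Rightarrow> 'a \<Rightarrow> complex) \<Rightarrow> 'a set \<Rightarrow> 'a set \<Rightarrow> bool" where
  "free_up_to_o_t s T tau A1 A2 \<longleftrightarrow>
     (\<forall>n i a. n \<ge> 1 \<and> alt_word A1 A2 n i a \<longrightarrow>
        small_o_t T (\<lambda>t. tau t (word_prod n (\<lambda>j. a j - s (tau t (a j)) 1))))"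

definition inf_free ::
  "(complex \<Rightarrow> 'a::ring_1 \<Rightarrow> 'a) \<Rightarrow> ('a \<Rightarrow> complex) \<Rightarrow> ('a \<Rightarrow> complex) \<Rightarrow> 'a set \<Rightarrow> 'a set \<Rightarrow> bool" where
  "inf_free s phi phi' A1 A2 \<longleftrightarrow> phi 1 = 1 \<and> phi' 1 = 0 \<and>
     (\<forall>n i a. n \<ge> 1 \<and> alt_word A1 A2 n i a \<and> (\<forall>j<n. phi (a j) = 0) \<longrightarrow>
        phi (word_prod n a) = 0 \<and>
        phi' (word_prod n a) =
          (\<Sum>j<n. phi (word_prod n (a(j := s (phi' (a j)) 1)))))"

end

theory Submission imports Defs begin

definition D :: "real set \<Rightarrow> (real \<Rightarrow> complex) \<Rightarrow> complex \<Rightarrow> complex \<Rightarrow> bool" where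
  "D T f c0 c1 \<longleftrightarrow> ((\<lambda>t. (f t - c0) / complex_of_real t) \<longlongrightarrow> c1) (at 0 within T)"

definition EXP :: "real set \<Rightarrow> (real \<Rightarrow> complex) \<Rightarrow> bool" where
  "EXP T f \<longleftrightarrow> (\<exists>c0 c1. D T f c0 c1)"

lemma ev_nz: "eventually (\<lambda>t. complex_of_real t \<noteq> 0) (at 0 within T)"
  by (auto simp: eventually_at_filter)

lemma ev_T: "eventually (\<lambda>t. t \<in> T) (at 0 within T)"
  by (auto simp: eventually_at_filter)

lemma D_small: "small_o_t T (\<lambda>t. f t - c0 - complex_of_real t * c1) \<longleftrightarrow> D T f c0 c1"
proof
  assume "small_o_t T (\<lambda>t. f t - c0 - complex_of_real t * c1)"
  hence "((\<lambda>t. (f t - c0 - complex_of_real t * c1) / complex_of_real t) \<longlongrightarrow> 0) (at 0 within T)"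
    unfolding small_o_t_def by (rule smalloD_tendsto)
  hence "((\<lambda>t. (f t - c0 - complex_of_real t * c1) / complex_of_real t + c1) \<longlongrightarrow> 0 + c1) (at 0 within T)"
    by (intro tendsto_intros)
  hence "((\<lambda>t. (f t - c0 - complex_of_real t * c1) / complex_of_real t + c1) \<longlongrightarrow> c1) (at 0 within T)" by simp
  thus "D T f c0 c1" unfolding D_def
    by (rule Lim_transform_eventually) (rule eventually_mono[OF ev_nz], simp add: field_simps)
next
  assume "D T f c0 c1"
  hence "((\<lambda>t. (f t - c0) / complex_of_real t - c1) \<longlongrightarrow> c1 - c1) (at 0 within T)"
    unfolding D_def by (intro tendsto_intros)
  hence "((\<lambda>t. (f t - c0) / complex_of_real t - c1) \<longlongrightarrow> 0) (at 0 within T)"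
    by simp
  hence "((\<lambda>t. (f t - c0 - complex_of_real t * c1) / complex_of_real t) \<longlongrightarrow> 0) (at 0 within T)"
    by (rule Lim_transform_eventually) (rule eventually_mono[OF ev_nz], simp add: field_simps)
  thus "small_o_t T (\<lambda>t. f t - c0 - complex_of_real t * c1)"
    unfolding small_o_t_def by (rule smalloI_tendsto[OF _ ev_nz])
qed

lemma D_lim: assumes "D T f c0 c1" shows "(f \<longlongrightarrow> c0) (at 0 within T)"
proof -
  have t0: "((\<lambda>t. complex_of_real t) \<longlongrightarrow> 0) (at 0 within T)"
    using tendsto_of_real[OF tendsto_ident_at[of 0 T]] by simp
  have "((\<lambda>t. c0 + complex_of_real t * ((f t - c0) / complex_of_real t)) \<longlongrightarrow> c0 + 0 * c1) (at 0 within T)"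
    using assms unfolding D_def by (intro tendsto_intros t0)
  hence "((\<lambda>t. c0 + complex_of_real t * ((f t - c0) / complex_of_real t)) \<longlongrightarrow> c0) (at 0 within T)" by simp
  thus ?thesis
    by (rule Lim_transform_eventually) (rule eventually_mono[OF ev_nz], simp)
qed

lemma D_cong: assumes "D T f c0 c1" "\<And>t. t \<in> T \<Longrightarrow> f t = g t" shows "D T g c0 c1"
  using assms(1) unfolding D_def
  by (rule Lim_transform_eventually) (rule eventually_mono[OF ev_T], simp add: assms(2))

lemma D_const: "D T (\<lambda>_. c) c 0"
  unfolding D_def by simp

lemma D_add: assumes "D T f c0 c1" "D T g d0 d1" shows "D T (\<lambda>t. f t + g t) (c0 + d0) (c1 + d1)"
proof -
  have "((\<lambda>t. (f t - c0) / complex_of_real t + (g t - d0) / complex_of_real t) \<longlongrightarrow> c1 + d1) (at 0 within T)"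
    using assms unfolding D_def by (intro tendsto_intros)
  thus ?thesis unfolding D_def by (simp add: add_divide_distrib[symmetric] algebra_simps)
qed

lemma D_mult: assumes "D T f c0 c1" "D T g d0 d1" shows "D T (\<lambda>t. f t * g t) (c0 * d0) (c1 * d0 + c0 * d1)"
proof -
  have "((\<lambda>t. (f t - c0) / complex_of_real t * g t + c0 * ((g t - d0) / complex_of_real t)) \<longlongrightarrow> c1 * d0 + c0 * d1) (at 0 within T)"
    using assms D_lim[OF assms(2)] unfolding D_def by (intro tendsto_intros)
  moreover have "\<And>t. (f t - c0) / complex_of_real t * g t + c0 * ((g t - d0) / complex_of_real t)
      = (f t * g t - c0 * d0) / complex_of_real t"
    by (simp add: times_divide_eq_left times_divide_eq_right add_divide_distrib[symmetric] algebra_simps)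
  ultimately show ?thesis unfolding D_def by simp
qed

lemma D_sum: assumes "\<And>j. j \<in> J \<Longrightarrow> D T (f j) (c0 j) (c1 j)"
  shows "D T (\<lambda>t. \<Sum>j\<in>J. f j t) (\<Sum>j\<in>J. c0 j) (\<Sum>j\<in>J. c1 j)"
  using assms
proof (induction J rule: infinite_finite_induct)
  case (insert x F) thus ?case by (simp add: D_add)
qed (auto simp: D_const)

lemma D_unique: assumes "0 islimpt T" "D T f c0 c1" "D T f d0 d1" shows "c0 = d0" "c1 = d1"
proof -
  have nt: "at 0 within T \<noteq> bot" using assms(1) by (simp add: trivial_limit_within)
  show "c0 = d0" using tendsto_unique[OF nt D_lim[OF assms(2)] D_lim[OF assms(3)]] .
  thus "c1 = d1" using tendsto_unique[OF nt] assms(2,3) unfolding D_def by simp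
qed

lemma EXP_add: "EXP T f \<Longrightarrow> EXP T g \<Longrightarrow> EXP T (\<lambda>t. f t + g t)"
  unfolding EXP_def using D_add by blast
lemma EXP_mult: "EXP T f \<Longrightarrow> EXP T g \<Longrightarrow> EXP T (\<lambda>t. f t * g t)"
  unfolding EXP_def using D_mult by blast
lemma EXP_const: "EXP T (\<lambda>_. c)"
  unfolding EXP_def using D_const by blast
lemma EXP_cong: "EXP T f \<Longrightarrow> (\<And>t. t \<in> T \<Longrightarrow> f t = g t) \<Longrightarrow> EXP T g"
  unfolding EXP_def using D_cong by blast
lemma EXP_diff: "EXP T f \<Longrightarrow> EXP T g \<Longrightarrow> EXP T (\<lambda>t. f t - g t)"
proof -
  assume a: "EXP T f" "EXP T g"
  have "EXP T (\<lambda>t. f t + (-1) * g t)" by (intro EXP_add EXP_mult EXP_const a)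
  thus ?thesis by simp
qed
lemma EXP_sum: "(\<And>j. j \<in> J \<Longrightarrow> EXP T (f j)) \<Longrightarrow> EXP T (\<lambda>t. \<Sum>j\<in>J. f j t)"
proof (induction J rule: infinite_finite_induct)
  case (insert x F) thus ?case by (simp add: EXP_add)
qed (auto simp: EXP_const)
definition Mg :: "('a::monoid_mult \<Rightarrow> 'a) \<Rightarrow> 'a list \<Rightarrow> nat \<Rightarrow> 'a" where
  "Mg g ys k = prod_list (take k ys) * prod_list (map g (drop k ys))"

definition dl :: "'a list \<Rightarrow> nat \<Rightarrow> 'a list" where
  "dl ys j = take j ys @ drop (Suc j) ys"

lemma Mg_Suc: "k < length ys \<Longrightarrow> Mg g ys (Suc k) = prod_list (take k ys) * ys!k * prod_list (map g (drop (Suc k) ys))"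
  unfolding Mg_def by (simp add: take_Suc_conv_app_nth mult.assoc)

lemma Mg_k: "k < length ys \<Longrightarrow> Mg g ys k = prod_list (take k ys) * g (ys!k) * prod_list (map g (drop (Suc k) ys))"
  unfolding Mg_def by (simp add: Cons_nth_drop_Suc[symmetric] mult.assoc)

lemma Mg_len: "Mg g ys (length ys) = prod_list ys"
  unfolding Mg_def by simp

lemma Mg_0: "Mg g ys 0 = prod_list (map g ys)"
  unfolding Mg_def by simp

lemma dl_take: "j < length ys \<Longrightarrow> take j (dl ys j) = take j ys"
  unfolding dl_def by simp
lemma dl_drop: "j < length ys \<Longrightarrow> drop j (dl ys j) = drop (Suc j) ys"
  unfolding dl_def by simp
lemma dl_len: "j < length ys \<Longrightarrow> length (dl ys j) = length ys - 1"
  unfolding dl_def by simp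
lemma dl_set: "set (dl ys j) \<subseteq> set ys"
  unfolding dl_def by (auto dest: in_set_takeD in_set_dropD)

lemma tele:
  fixes ys :: "'a::ring_1 list"
  shows "k \<le> length ys \<Longrightarrow> prod_list ys = Mg g ys k +
    (\<Sum>j\<in>{k..<length ys}. prod_list (take j ys) * (ys!j - g (ys!j)) * prod_list (map g (drop (Suc j) ys)))"
proof (induction "length ys - k" arbitrary: k)
  case 0
  hence "k = length ys" by simp
  thus ?case by (simp add: Mg_len)
next
  case (Suc m)
  hence k: "k < length ys" by simp
  have IH: "prod_list ys = Mg g ys (Suc k) +
    (\<Sum>j\<in>{Suc k..<length ys}. prod_list (take j ys) * (ys!j - g (ys!j)) * prod_list (map g (drop (Suc j) ys)))"
    using Suc by simp
  have s: "{k..<length ys} = insert k {Suc k..<length ys}" using k by auto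
  show ?case unfolding IH s using k
    by (simp add: Mg_Suc Mg_k algebra_simps)
qed


lemma vs_cc: "vector_space ((*) :: complex \<Rightarrow> complex \<Rightarrow> complex)"
  unfolding vector_space_def module_def by (auto simp: algebra_simps)
lemma linI: "vector_space s \<Longrightarrow> (\<And>x y. f (x + y) = f x + f y) \<Longrightarrow> (\<And>c x. f (s c x) = c * f x) \<Longrightarrow> lin_functional s f"
  unfolding lin_functional_def Vector_Spaces.linear_iff using vs_cc by auto
lemma linD: assumes "lin_functional s f" shows "f (x + y) = f x + f y" "f (s c x) = c * f x"
  using assms unfolding lin_functional_def Vector_Spaces.linear_iff by auto
lemma lin_sum: assumes "lin_functional s f" shows "f (\<Sum>j\<in>J. g j) = (\<Sum>j\<in>J. f (g j))"
proof (induction J rule: infinite_finite_induct)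
  case (infinite A) 
  have "f 0 = f 0 + f 0" using linD(1)[OF assms, of 0 0] by simp
  thus ?case using infinite by simp
next
  case empty
  have "f 0 = f 0 + f 0" using linD(1)[OF assms, of 0 0] by simp
  thus ?case by simp
next
  case (insert x F) thus ?case by (simp add: linD(1)[OF assms])
qed

inductive_set Wsp :: "(complex \<Rightarrow> 'a::ring_1 \<Rightarrow> 'a) \<Rightarrow> 'a set \<Rightarrow> 'a set \<Rightarrow> 'a set" for s A1 A2 where
  W1: "set ys \<subseteq> A1 \<union> A2 \<Longrightarrow> prod_list ys \<in> Wsp s A1 A2"
| W2: "x \<in> Wsp s A1 A2 \<Longrightarrow> y \<in> Wsp s A1 A2 \<Longrightarrow> x + y \<in> Wsp s A1 A2"
| W3: "x \<in> Wsp s A1 A2 \<Longrightarrow> s c x \<in> Wsp s A1 A2"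

lemma Wsp_mult:
  assumes alg: "complex_algebra s" and x: "x \<in> Wsp s A1 A2" and y: "y \<in> Wsp s A1 A2"
  shows "x * y \<in> Wsp s A1 A2"
  using x
proof induction
  case (W1 ys)
  show ?case using y
  proof induction
    case (W1 zs) thus ?case using Wsp.W1[of "ys @ zs"] \<open>set ys \<subseteq> _\<close> by simp
  next
    case (W2 a b) thus ?case by (simp add: distrib_left Wsp.W2)
  next
    case (W3 a c) thus ?case using alg unfolding complex_algebra_def by (metis Wsp.W3)
  qed
next
  case (W2 a b) thus ?case by (simp add: distrib_right Wsp.W2)
next
  case (W3 a c) thus ?case using alg unfolding complex_algebra_def by (metis Wsp.W3)
qed

lemma Wsp_UNIV:
  assumes alg: "complex_algebra s" and gen: "generated_by s A1 A2"
  shows "Wsp s A1 A2 = UNIV"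
proof -
  have "unital_subalgebra s (Wsp s A1 A2)"
    unfolding unital_subalgebra_def
    using Wsp.W1[of "[]"] Wsp.W2 Wsp.W3 Wsp_mult[OF alg] by auto
  moreover have "A1 \<union> A2 \<subseteq> Wsp s A1 A2"
    using Wsp.W1[of "[x]" for x] by auto
  ultimately show ?thesis using gen unfolding generated_by_def by blast
qed


context
  fixes s :: "complex \<Rightarrow> 'a::ring_1 \<Rightarrow> 'a"
    and A1 A2 :: "'a set"
    and T :: "real set"
    and tau :: "real \<Rightarrow> 'a \<Rightarrow> complex"
    and tau0 tau1 :: "'a \<Rightarrow> complex"
  assumes alg: "complex_algebra s"
    and sub1: "unital_subalgebra s A1"
    and sub2: "unital_subalgebra s A2"
    and lin: "\<And>t. t \<in> T \<Longrightarrow> lin_functional s (tau t)"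
    and unital: "\<And>t. t \<in> T \<Longrightarrow> tau t 1 = 1"
    and free: "free_up_to_o_t s T tau A1 A2"
    and expand: "\<And>a. a \<in> A1 \<union> A2 \<Longrightarrow>
                   small_o_t T (\<lambda>t. tau t a - tau0 a - complex_of_real t * tau1 a)"
begin

definition cen :: "real \<Rightarrow> 'a \<Rightarrow> 'a" where "cen t x = x - s (tau t x) 1"

lemma alg_l: "s c x * y = s c (x * y)"
  using alg unfolding complex_algebra_def by metis
lemma alg_r: "x * s c y = s c (x * y)"
  using alg unfolding complex_algebra_def by metis

lemma term_eq: "j < length ys \<Longrightarrow>
  prod_list (take j ys) * (ys!j - cen t (ys!j)) * prod_list (map (cen t) (drop (Suc j) ys))
  = s (tau t (ys!j)) (Mg (cen t) (dl ys j) j)"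
  unfolding cen_def Mg_def by (simp add: dl_take dl_drop alg_l alg_r)

lemma tele_tau:
  assumes t: "t \<in> T" and k: "k \<le> length ys"
  shows "tau t (prod_list ys) = tau t (Mg (cen t) ys k) +
     (\<Sum>j\<in>{k..<length ys}. tau t (ys!j) * tau t (Mg (cen t) (dl ys j) j))"
proof -
  have "prod_list ys = Mg (cen t) ys k + (\<Sum>j\<in>{k..<length ys}. s (tau t (ys!j)) (Mg (cen t) (dl ys j) j))"
    using tele[OF k, of "cen t"] term_eq by simp
  moreover have L: "lin_functional s (tau t)" by (rule lin[OF t])
  ultimately show ?thesis by (simp add: linD[OF L] lin_sum[OF L])
qed

lemma exp_letter: "a \<in> A1 \<union> A2 \<Longrightarrow> D T (\<lambda>t. tau t a) (tau0 a) (tau1 a)"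
  using expand D_small by blast

lemma part1: "set ys \<subseteq> A1 \<union> A2 \<Longrightarrow> k \<le> length ys \<Longrightarrow> EXP T (\<lambda>t. tau t (Mg (cen t) ys k))"
proof (induction "length ys" arbitrary: ys k rule: less_induct)
  case less
  note IH = less.hyps
  define n where "n = length ys"
  have IHd: "EXP T (\<lambda>t. tau t (Mg (cen t) (dl ys j) j))" if j: "j < n" for j
    using IH[of "dl ys j" j] j less.prems dl_set[of ys j] unfolding n_def by (simp add: dl_len)
  have El: "EXP T (\<lambda>t. tau t (ys!j))" if "j < n" for j
  proof -
    have "ys!j \<in> set ys" using that unfolding n_def by simp
    hence "ys!j \<in> A1 \<union> A2" using less.prems(1) by blast
    thus ?thesis unfolding EXP_def using exp_letter by blast
  qed
  have A: "EXP T (\<lambda>t. tau t (prod_list ys))"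
  proof (cases "\<exists>j. Suc j < n \<and> ((ys!j \<in> A1 \<and> ys!Suc j \<in> A1) \<or> (ys!j \<in> A2 \<and> ys!Suc j \<in> A2))")
    case True
    then obtain j where j: "Suc j < n" and bj: "(ys!j \<in> A1 \<and> ys!Suc j \<in> A1) \<or> (ys!j \<in> A2 \<and> ys!Suc j \<in> A2)" by blast
    define zs where "zs = take j ys @ (ys!j * ys!Suc j) # drop (Suc (Suc j)) ys"
    have j1: "j < length ys" "Suc j < length ys" using j unfolding n_def by auto
    have e1: "ys = take j ys @ ys!j # drop (Suc j) ys" by (rule id_take_nth_drop[OF j1(1)])
    have e2: "drop (Suc j) ys = ys!Suc j # drop (Suc (Suc j)) ys" by (rule Cons_nth_drop_Suc[OF j1(2), symmetric])
    have ys: "ys = take j ys @ ys!j # ys!Suc j # drop (Suc (Suc j)) ys" using e1 unfolding e2 .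
    have "prod_list ys = prod_list (take j ys @ ys!j # ys!Suc j # drop (Suc (Suc j)) ys)"
      using ys by (rule arg_cong)
    also have "\<dots> = prod_list zs" unfolding zs_def by (simp add: mult.assoc)
    finally have pz: "prod_list zs = prod_list ys" by simp
    have lz: "length zs < length ys" unfolding zs_def using j n_def by simp
    have "ys!j * ys!Suc j \<in> A1 \<union> A2" using bj sub1 sub2 unfolding unital_subalgebra_def by blast
    moreover have "set (take j ys) \<subseteq> A1 \<union> A2" "set (drop (Suc (Suc j)) ys) \<subseteq> A1 \<union> A2"
      using less.prems(1) by (auto dest: in_set_takeD in_set_dropD)
    ultimately have sz: "set zs \<subseteq> A1 \<union> A2" unfolding zs_def by auto
    show ?thesis using IH[OF lz sz, of "length zs"] pz by (simp add: Mg_len)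
  next
    case False
    show ?thesis
    proof (cases "n = 0")
      case True
      hence "ys = []" unfolding n_def by simp
      thus ?thesis using unital by (intro EXP_cong[OF EXP_const[of T 1]]) auto
    next
      case n0: False
      define i where "i = (\<lambda>j. ys!j \<in> A1)"
      have aw: "alt_word A1 A2 n i (\<lambda>j. ys!j)"
      proof -
        have mem: "ys!j \<in> A1 \<union> A2" if "j < n" for j using less.prems(1) that nth_mem unfolding n_def by blast
        moreover have "i j \<noteq> i (Suc j)" if "Suc j < n" for j
          using False that mem[of j] mem[of "Suc j"]
          unfolding i_def by auto
        ultimately show ?thesis unfolding alt_word_def i_def by auto
      qed
      have "small_o_t T (\<lambda>t. tau t (word_prod n (\<lambda>j. ys!j - s (tau t (ys!j)) 1)))"
        using free[unfolded free_up_to_o_t_def, rule_format, of n i "\<lambda>j. ys!j"] aw n0 by simp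
      moreover have "word_prod n (\<lambda>j. ys!j - s (tau t (ys!j)) 1) = Mg (cen t) ys 0" for t
      proof -
        have "map (\<lambda>j. ys!j - s (tau t (ys!j)) 1) [0..<n] = map (cen t) (map (\<lambda>j. ys!j) [0..<n])"
          unfolding cen_def by simp
        thus ?thesis unfolding word_prod_def Mg_0 n_def by (simp add: map_nth)
      qed
      ultimately have "small_o_t T (\<lambda>t. tau t (Mg (cen t) ys 0) - 0 - complex_of_real t * 0)" by simp
      hence E0: "EXP T (\<lambda>t. tau t (Mg (cen t) ys 0))" unfolding EXP_def D_small by blast

      have "EXP T (\<lambda>t. tau t (Mg (cen t) ys 0) +
             (\<Sum>j\<in>{0..<length ys}. tau t (ys!j) * tau t (Mg (cen t) (dl ys j) j)))"
        using E0 El IHd unfolding n_def by (intro EXP_add EXP_sum EXP_mult) auto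
      thus ?thesis
      proof (rule EXP_cong)
        fix t assume t: "t \<in> T"
        show "tau t (Mg (cen t) ys 0) + (\<Sum>j\<in>{0..<length ys}. tau t (ys!j) * tau t (Mg (cen t) (dl ys j) j)) = tau t (prod_list ys)"
          using tele_tau[OF t, of 0 ys] by simp
      qed
    qed
  qed
  have "EXP T (\<lambda>t. tau t (prod_list ys) -
             (\<Sum>j\<in>{k..<length ys}. tau t (ys!j) * tau t (Mg (cen t) (dl ys j) j)))"
    using A El IHd unfolding n_def by (intro EXP_diff EXP_sum EXP_mult) auto
  thus ?case
  proof (rule EXP_cong)
    fix t assume t: "t \<in> T"
    show "tau t (prod_list ys) - (\<Sum>j\<in>{k..<length ys}. tau t (ys!j) * tau t (Mg (cen t) (dl ys j) j)) = tau t (Mg (cen t) ys k)"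
      unfolding tele_tau[OF t less.prems(2)] by (rule add_diff_cancel_right')
  qed
qed

lemma all_exp:
  assumes gen: "generated_by s A1 A2"
  shows "EXP T (\<lambda>t. tau t a)"
proof -
  have "a \<in> Wsp s A1 A2" using Wsp_UNIV[OF alg gen] by simp
  thus ?thesis
  proof induction
    case (W1 ys) thus ?case using part1[OF W1, of "length ys"] by (simp add: Mg_len)
  next
    case (W2 x y)
    hence "EXP T (\<lambda>t. tau t x + tau t y)" by (intro EXP_add)
    thus ?case by (rule EXP_cong) (simp add: linD[OF lin])
  next
    case (W3 x c)
    hence "EXP T (\<lambda>t. c * tau t x)" by (intro EXP_mult EXP_const)
    thus ?case by (rule EXP_cong) (simp add: linD[OF lin])
  qed
qed

lemma main:
  assumes gen: "generated_by s A1 A2" and acc: "(0::real) islimpt T"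
  shows "\<exists>phi phi'. lin_functional s phi \<and> lin_functional s phi' \<and>
           (\<forall>a\<in>A1 \<union> A2. phi a = tau0 a \<and> phi' a = tau1 a) \<and>
           (\<forall>a. small_o_t T (\<lambda>t. tau t a - phi a - complex_of_real t * phi' a)) \<and>
           inf_free s phi phi' A1 A2"
proof -
  define phi where "phi a = (SOME c0. \<exists>c1. D T (\<lambda>t. tau t a) c0 c1)" for a
  define phi' where "phi' a = (SOME c1. D T (\<lambda>t. tau t a) (phi a) c1)" for a
  have Dall: "D T (\<lambda>t. tau t a) (phi a) (phi' a)" for a
  proof -
    have "\<exists>c0 c1. D T (\<lambda>t. tau t a) c0 c1" using all_exp[OF gen] unfolding EXP_def .
    hence "\<exists>c1. D T (\<lambda>t. tau t a) (phi a) c1" unfolding phi_def by (rule someI_ex)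
    thus ?thesis unfolding phi'_def by (rule someI_ex)
  qed
  have uniq: "phi a = c0 \<and> phi' a = c1" if "D T (\<lambda>t. tau t a) c0 c1" for a c0 c1
    using D_unique[OF acc Dall[of a] that] by blast
  have vs: "vector_space s" using alg unfolding complex_algebra_def by simp
  have hadd: "phi (x+y) = phi x + phi y \<and> phi' (x+y) = phi' x + phi' y" for x y
  proof -
    have "D T (\<lambda>t. tau t x + tau t y) (phi x + phi y) (phi' x + phi' y)" by (intro D_add Dall)
    hence "D T (\<lambda>t. tau t (x+y)) (phi x + phi y) (phi' x + phi' y)" by (rule D_cong) (simp add: linD[OF lin])
    thus ?thesis by (rule uniq)
  qed
  have hscl: "phi (s c x) = c * phi x \<and> phi' (s c x) = c * phi' x" for c x
  proof -
    have "D T (\<lambda>t. c * tau t x) (c * phi x) (0 * phi x + c * phi' x)" by (intro D_mult D_const Dall)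
    hence "D T (\<lambda>t. c * tau t x) (c * phi x) (c * phi' x)" by simp
    hence "D T (\<lambda>t. tau t (s c x)) (c * phi x) (c * phi' x)" by (rule D_cong) (simp add: linD[OF lin])
    thus ?thesis by (rule uniq)
  qed
  have lphi: "lin_functional s phi" using hadd hscl by (intro linI[OF vs]) auto
  have lphi': "lin_functional s phi'" using hadd hscl by (intro linI[OF vs]) auto
  have agree: "\<forall>a\<in>A1 \<union> A2. phi a = tau0 a \<and> phi' a = tau1 a" using uniq exp_letter by blast
  have expa: "\<forall>a. small_o_t T (\<lambda>t. tau t a - phi a - complex_of_real t * phi' a)" unfolding D_small using Dall by blast
  have one: "phi 1 = 1 \<and> phi' 1 = 0"
  proof -
    have "D T (\<lambda>t. tau t 1) 1 0" by (rule D_cong[OF D_const]) (simp add: unital)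
    thus ?thesis by (rule uniq)
  qed
  have L: "((\<lambda>t. tau t (Mg (cen t) zs k)) \<longlongrightarrow> phi (prod_list zs)) (at 0 within T)"
    if zs: "set zs \<subseteq> A1 \<union> A2" and z0: "\<forall>x\<in>set zs. phi x = 0" and k: "k \<le> length zs" for zs k
  proof -
    have lim_j: "((\<lambda>t. tau t (zs!j) * tau t (Mg (cen t) (dl zs j) j)) \<longlongrightarrow> 0) (at 0 within T)"
      if j: "j < length zs" for j
    proof -
      have "EXP T (\<lambda>t. tau t (Mg (cen t) (dl zs j) j))"
        using part1[of "dl zs j" j] dl_set[of zs j] dl_len[OF j] zs j by auto
      then obtain c0 c1 where "D T (\<lambda>t. tau t (Mg (cen t) (dl zs j) j)) c0 c1" unfolding EXP_def by blast
      hence l2: "((\<lambda>t. tau t (Mg (cen t) (dl zs j) j)) \<longlongrightarrow> c0) (at 0 within T)" by (rule D_lim)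
      have l1: "((\<lambda>t. tau t (zs!j)) \<longlongrightarrow> 0) (at 0 within T)"
        using D_lim[OF Dall[of "zs!j"]] z0 j by simp
      from tendsto_mult[OF l1 l2] show ?thesis by simp
    qed
    have "((\<lambda>t. tau t (prod_list zs) - (\<Sum>j\<in>{k..<length zs}. tau t (zs!j) * tau t (Mg (cen t) (dl zs j) j)))
          \<longlongrightarrow> phi (prod_list zs) - (\<Sum>j\<in>{k..<length zs}. 0)) (at 0 within T)"
      by (intro tendsto_diff tendsto_sum D_lim[OF Dall] lim_j) auto
    hence "((\<lambda>t. tau t (prod_list zs) - (\<Sum>j\<in>{k..<length zs}. tau t (zs!j) * tau t (Mg (cen t) (dl zs j) j)))
          \<longlongrightarrow> phi (prod_list zs)) (at 0 within T)" by simp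
    thus ?thesis by (rule Lim_transform_eventually) (rule eventually_mono[OF ev_T], simp add: tele_tau[OF _ k])
  qed
  have IF: "phi (word_prod n a) = 0 \<and> phi' (word_prod n a) = (\<Sum>j<n. phi (word_prod n (a(j := s (phi' (a j)) 1))))"
    if n: "n \<ge> 1" and aw: "alt_word A1 A2 n i a" and a0: "\<forall>j<n. phi (a j) = 0" for n i a
  proof -
    define ys where "ys = map a [0..<n]"
    have ly: "length ys = n" and yj: "\<And>j. j<n \<Longrightarrow> ys!j = a j" by (simp_all add: ys_def)
    have sy: "set ys \<subseteq> A1 \<union> A2" using aw unfolding alt_word_def ys_def by (auto split: if_splits)
    have y0: "\<forall>x\<in>set ys. phi x = 0" using a0 unfolding ys_def by auto
    have wp: "word_prod n a = prod_list ys" unfolding word_prod_def ys_def ..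
    have "small_o_t T (\<lambda>t. tau t (word_prod n (\<lambda>j. a j - s (tau t (a j)) 1)))"
      using free[unfolded free_up_to_o_t_def, rule_format, of n i a] aw n by simp
    moreover have "word_prod n (\<lambda>j. a j - s (tau t (a j)) 1) = Mg (cen t) ys 0" for t
      unfolding word_prod_def Mg_0 ys_def cen_def by (simp add: o_def)
    ultimately have "small_o_t T (\<lambda>t. tau t (Mg (cen t) ys 0) - 0 - complex_of_real t * 0)" by simp
    hence Mf: "((\<lambda>t. (tau t (Mg (cen t) ys 0) - 0) / complex_of_real t) \<longlongrightarrow> 0) (at 0 within T)"
      unfolding D_small D_def .
    have Dj: "((\<lambda>t. tau t (ys!j) / complex_of_real t) \<longlongrightarrow> phi' (a j)) (at 0 within T)" if j: "j < n" for j
      using Dall[of "a j"] a0 j yj[OF j] unfolding D_def by simp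
    have Lj: "((\<lambda>t. tau t (Mg (cen t) (dl ys j) j)) \<longlongrightarrow> phi (prod_list (dl ys j))) (at 0 within T)"
      if j: "j < n" for j
    proof -
      have "set (dl ys j) \<subseteq> A1 \<union> A2" using dl_set[of ys j] sy by blast
      moreover have "\<forall>x\<in>set (dl ys j). phi x = 0" using dl_set[of ys j] y0 by blast
      moreover have "j \<le> length (dl ys j)" using dl_len[of j ys] j ly by simp
      ultimately show ?thesis by (rule L)
    qed
    have "((\<lambda>t. (tau t (Mg (cen t) ys 0) - 0) / complex_of_real t +
            (\<Sum>j\<in>{0..<n}. (tau t (ys!j) / complex_of_real t) * tau t (Mg (cen t) (dl ys j) j)))
         \<longlongrightarrow> 0 + (\<Sum>j\<in>{0..<n}. phi' (a j) * phi (prod_list (dl ys j)))) (at 0 within T)"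
      using Mf Dj Lj by (intro tendsto_add tendsto_sum tendsto_mult) auto
    hence lim: "((\<lambda>t. (tau t (Mg (cen t) ys 0) - 0) / complex_of_real t +
            (\<Sum>j\<in>{0..<n}. (tau t (ys!j) / complex_of_real t) * tau t (Mg (cen t) (dl ys j) j)))
         \<longlongrightarrow> (\<Sum>j\<in>{0..<n}. phi' (a j) * phi (prod_list (dl ys j)))) (at 0 within T)"
      (is "(?g \<longlongrightarrow> _) _")
      by (simp only: add_0_left)
    have ev: "eventually (\<lambda>t. ?g t = (tau t (prod_list ys) - 0) / complex_of_real t) (at 0 within T)"
    proof (rule eventually_mono[OF ev_T])
      fix t assume t: "t \<in> T"
      have e: "tau t (prod_list ys) = tau t (Mg (cen t) ys 0) +
         (\<Sum>j\<in>{0..<n}. tau t (ys!j) * tau t (Mg (cen t) (dl ys j) j))"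
        using tele_tau[OF t, of 0 ys] ly by simp
      show "?g t = (tau t (prod_list ys) - 0) / complex_of_real t"
        unfolding e by (simp add: add_divide_distrib sum_divide_distrib)
    qed
    have "D T (\<lambda>t. tau t (prod_list ys)) 0 (\<Sum>j\<in>{0..<n}. phi' (a j) * phi (prod_list (dl ys j)))"
      unfolding D_def using Lim_transform_eventually[OF lim ev] .
    hence u: "phi (prod_list ys) = 0 \<and> phi' (prod_list ys) = (\<Sum>j\<in>{0..<n}. phi' (a j) * phi (prod_list (dl ys j)))"
      by (rule uniq)
    have rep: "phi (word_prod n (a(j := s (phi' (a j)) 1))) = phi' (a j) * phi (prod_list (dl ys j))"
      if j: "j < n" for j
    proof -
      have "map (a(j := v)) [0..<n] = ys[j := v]" for v
        by (rule nth_equalityI) (auto simp: ys_def nth_list_update)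
      hence "word_prod n (a(j := s (phi' (a j)) 1)) = prod_list (ys[j := s (phi' (a j)) 1])"
        unfolding word_prod_def by simp
      also have "\<dots> = prod_list (take j ys) * s (phi' (a j)) 1 * prod_list (drop (Suc j) ys)"
        using j ly by (simp add: upd_conv_take_nth_drop mult.assoc)
      also have "\<dots> = s (phi' (a j)) (prod_list (dl ys j))" unfolding dl_def by (simp add: alg_l alg_r)
      finally show ?thesis using linD(2)[OF lphi] by simp
    qed
    have "(\<Sum>j<n. phi (word_prod n (a(j := s (phi' (a j)) 1)))) = (\<Sum>j\<in>{0..<n}. phi' (a j) * phi (prod_list (dl ys j)))"
      unfolding atLeast0LessThan by (rule sum.cong) (auto simp: rep)
    thus ?thesis using u wp by simp
  qed
  have inf: "inf_free s phi phi' A1 A2" unfolding inf_free_def using one IF by blast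
  show ?thesis using lphi lphi' agree expa inf by blast
qed

end

theorem proposition2p4:
  fixes s :: "complex \<Rightarrow> 'a::ring_1 \<Rightarrow> 'a"
    and A1 A2 :: "'a set"
    and T :: "real set"
    and tau :: "real \<Rightarrow> 'a \<Rightarrow> complex"
    and tau0 tau1 :: "'a \<Rightarrow> complex"
  assumes alg: "complex_algebra s"
    and sub1: "unital_subalgebra s A1"
    and sub2: "unital_subalgebra s A2"
    and gen: "generated_by s A1 A2"
    and acc: "(0::real) islimpt T"
    and lin: "\<And>t. t \<in> T \<Longrightarrow> lin_functional s (tau t)"
    and unital: "\<And>t. t \<in> T \<Longrightarrow> tau t 1 = 1"
    and free: "free_up_to_o_t s T tau A1 A2"
    and expand: "\<And>a. a \<in> A1 \<union> A2 \<Longrightarrow>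
                   small_o_t T (\<lambda>t. tau t a - tau0 a - complex_of_real t * tau1 a)"
  shows "\<exists>phi phi'. lin_functional s phi \<and> lin_functional s phi' \<and>
           (\<forall>a\<in>A1 \<union> A2. phi a = tau0 a \<and> phi' a = tau1 a) \<and>
           (\<forall>a. small_o_t T (\<lambda>t. tau t a - phi a - complex_of_real t * phi' a)) \<and>
           inf_free s phi phi' A1 A2"
  by (rule main[OF alg sub1 sub2 lin unital free expand gen acc])

end
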